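(* Let $\kappa$ be an uncountable regular cardinal, let $\mathcal{I}$ be a $\kappa$-complete proper ideal on $\kappa$ containing every bounded subset of $\kappa$, and suppose $\mathcal{I}$ has a basis of size $\kappa$. Let $\nu\in\{2,\kappa\}$. Then the $\mathcal{I}$-Borel hierarchy on ${}^{\kappa}\nu$ is increasing: for all ordinals $1\le\alpha<\beta$, $\boldsymbol{\Sigma}^0_\alpha({}^{\kappa}\nu,\tau_{\mathcal{I}})\subseteq\boldsymbol{\Sigma}^0_\beta({}^{\kappa}\nu,\tau_{\mathcal{I}})$.
   Context: A basis for $\mathcal{I}$ is a family $\mathcal{B}\subseteq\mathcal{I}$ such that every member of $\mathcal{I}$ is contained in some member of $\mathcal{B}$. ${}^{\kappa}\nu$ is the set of functions $\kappa\to\nu$; $\tau_{\mathcal{I}}$ is the topology generated by the sets $\mathbf{N}_f=\{x:f\subseteq x\}$ for $f\colon D\to\nu$ with $D\in\mathcal{I}$. $\boldsymbol{\Sigma}^0_1$ = $\tau_{\mathcal{I}}$-open sets, $\boldsymbol{\Pi}^0_1$ = $\tau_{\mathcal{I}}$-closed sets; for $\alpha>1$, $\boldsymbol{\Sigma}^0_\alpha$ is the family of unions $\bigcup_{\gamma<\kappa}A_\gamma$ with $A_\gamma\in\bigcup_{1\le\beta<\alpha}\boldsymbol{\Pi}^0_\beta$, and $\boldsymbol{\Pi}^0_\alpha$ the complements of $\boldsymbol{\Sigma}^0_\alpha$ sets. *)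

theory Defs
  imports "HOL-Analysis.Analysis"
begin

text \<open>Basic open sets N_f = {x. f \<subseteq> x} for partial functions f with domain D in the ideal I.
  A partial function D \<rightarrow> \<nu> is represented by a total g together with its domain D.\<close>
definition basic_nbhds :: "'k set set \<Rightarrow> ('k \<Rightarrow> 'v) set set" where
  "basic_nbhds I = {{x. \<forall>i\<in>D. x i = g i} | D g. D \<in> I}"

definition tau_I :: "'k set set \<Rightarrow> ('k \<Rightarrow> 'v) topology" where
  "tau_I I = topology_generated_by (basic_nbhds I)"

text \<open>The Borel hierarchy indexed by a well-order W: the element a of Field W stands for
  the ordinal 1 + otype(strict initial segment below a). So a minimal element gives Sigma_1
  (open sets); otherwise Sigma_a consists of unions of K-indexed families (K = kappa) of sets
  each of which is Pi_b (complement of a Sigma_b set) for some b strictly below a.\<close>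
inductive Borel_Sigma :: "'x topology \<Rightarrow> 'k set \<Rightarrow> 'o rel \<Rightarrow> 'o \<Rightarrow> 'x set \<Rightarrow> bool"
  for T :: "'x topology" and K :: "'k set" and W :: "'o rel" where
  open_level: "a \<in> Field W \<Longrightarrow> (\<forall>b. (b, a) \<in> W \<longrightarrow> b = a) \<Longrightarrow> openin T X
     \<Longrightarrow> Borel_Sigma T K W a X"
| union_level: "a \<in> Field W \<Longrightarrow> (\<exists>b. (b, a) \<in> W \<and> b \<noteq> a)
     \<Longrightarrow> (\<forall>i\<in>K. A i \<subseteq> topspace T \<and>
            (\<exists>b. (b, a) \<in> W \<and> b \<noteq> a \<and> Borel_Sigma T K W b (topspace T - A i)))
     \<Longrightarrow> Borel_Sigma T K W a (\<Union>i\<in>K. A i)"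

end

theory Submission
  imports Defs
begin

lemma two_ordLess:
  assumes "card_order (r :: 'k rel)" "\<not> countable (UNIV :: 'k set)"
  shows "(card_of {D1, D2 :: 'k set}, r) \<in> ordLess"
proof -
  have wo: "well_order_on UNIV r" using assms(1) card_order_on_well_order_on by blast
  have F: "Field r = UNIV" using wo well_order_on_Field by blast
  have inf: "\<not> finite (Field r)" using F assms(2) countable_finite by auto
  show ?thesis
    by (rule finite_ordLess_infinite) (use wo inf F card_of_Well_order in \<open>auto simp: Field_card_of\<close>)
qed

lemma topspace_tau: assumes "{} \<in> I" shows "topspace (tau_I I) = UNIV"
proof -
  have "UNIV \<in> basic_nbhds I" unfolding basic_nbhds_def using assms by force
  then show ?thesis unfolding tau_I_def topology_generated_by_topspace by blast
qed

lemma nbhd_open: assumes "D \<in> I" shows "openin (tau_I I) {x. \<forall>i\<in>D. x i = g i}"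
  unfolding tau_I_def
  by (rule topology_generated_by_Basis) (use assms in \<open>auto simp: basic_nbhds_def\<close>)

lemma open_local:
  assumes "openin (tau_I I) U"
    and un: "\<And>D E. D \<in> I \<Longrightarrow> E \<in> I \<Longrightarrow> D \<union> E \<in> I"
    and emp: "{} \<in> I"
  shows "\<forall>x\<in>U. \<exists>D\<in>I. \<forall>y. (\<forall>i\<in>D. y i = x i) \<longrightarrow> y \<in> U"
proof -
  have "generate_topology_on (basic_nbhds I) U"
    using assms(1) unfolding tau_I_def by (rule openin_topology_generated_by)
  then show ?thesis
  proof (induction rule: generate_topology_on.induct)
    case Empty then show ?case by simp
  next
    case (Int a b)
    show ?case
    proof
      fix x assume "x \<in> a \<inter> b"
      then obtain D E where "D \<in> I" "E \<in> I" "\<forall>y. (\<forall>i\<in>D. y i = x i) \<longrightarrow> y \<in> a"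
        "\<forall>y. (\<forall>i\<in>E. y i = x i) \<longrightarrow> y \<in> b" using Int.IH by blast
      then show "\<exists>D\<in>I. \<forall>y. (\<forall>i\<in>D. y i = x i) \<longrightarrow> y \<in> a \<inter> b"
        by (intro bexI[of _ "D \<union> E"]) (auto intro: un)
    qed
  next
    case (UN K)
    show ?case
    proof
      fix x assume "x \<in> \<Union>K"
      then obtain k where k: "k \<in> K" "x \<in> k" by blast
      then obtain D where D: "D \<in> I" "\<forall>y. (\<forall>i\<in>D. y i = x i) \<longrightarrow> y \<in> k"
        using UN.IH[OF k(1)] by blast
      show "\<exists>D\<in>I. \<forall>y. (\<forall>i\<in>D. y i = x i) \<longrightarrow> y \<in> \<Union>K"
        using D k(1) by blast
    qed
  next
    case (Basis s)
    then obtain D g where s: "s = {x. \<forall>i\<in>D. x i = g i}" "D \<in> I" unfolding basic_nbhds_def by blast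
    show ?case
    proof
      fix x assume "x \<in> s"
      then show "\<exists>D\<in>I. \<forall>y. (\<forall>i\<in>D. y i = x i) \<longrightarrow> y \<in> s" using s by (intro bexI[of _ D]) auto
    qed
  qed
qed

theorem corollary4p5:
  fixes r :: "'k rel" and I :: "'k set set" and W :: "'o rel"
    and T :: "('k \<Rightarrow> 'v) topology"
  assumes kappa_card: "card_order r"
    and kappa_regular: "regularCard r"
    and kappa_uncountable: "\<not> countable (UNIV :: 'k set)"
    and ideal_down: "\<And>X Y. X \<in> I \<Longrightarrow> Y \<subseteq> X \<Longrightarrow> Y \<in> I"
    and ideal_complete: "\<And>F. F \<subseteq> I \<Longrightarrow> (card_of F, r) \<in> ordLess \<Longrightarrow> \<Union>F \<in> I"
    and ideal_proper: "UNIV \<notin> I"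
    and ideal_bounded: "\<And>X c. (\<forall>x\<in>X. (x, c) \<in> r) \<Longrightarrow> X \<in> I"
    and ideal_basis: "\<exists>B \<subseteq> I. (card_of B, r) \<in> ordIso \<and> (\<forall>X\<in>I. \<exists>Y\<in>B. X \<subseteq> Y)"
    and nu: "(card_of (UNIV :: 'v set), card_of (UNIV :: bool set)) \<in> ordIso \<or> (card_of (UNIV :: 'v set), r) \<in> ordIso"
    and T_def: "T = tau_I I"
    and W: "Well_order W"
    and ab: "(a, b) \<in> W" "a \<noteq> b"
  shows "{X. Borel_Sigma T (UNIV :: 'k set) W a X} \<subseteq> {X. Borel_Sigma T (UNIV :: 'k set) W b X}"
proof
  have emp: "{} \<in> I" using ideal_bounded[of "{}"] by simp
  have un: "D \<union> E \<in> I" if "D \<in> I" "E \<in> I" for D E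
    using ideal_complete[of "{D, E}"] that two_ordLess[OF kappa_card kappa_uncountable] by auto
  have top: "topspace T = UNIV" using topspace_tau[OF emp] T_def by simp
  have trans: "trans W" and anti: "antisym W" using W
    unfolding well_order_on_def linear_order_on_def partial_order_on_def preorder_on_def by auto
  have bF: "b \<in> Field W" using ab(1) by (auto simp: Field_def)
  have bnm: "\<exists>c. (c, b) \<in> W \<and> c \<noteq> b" using ab by blast
  fix X assume "X \<in> {X. Borel_Sigma T (UNIV :: 'k set) W a X}"
  then have "Borel_Sigma T (UNIV :: 'k set) W a X" by simp
  then show "X \<in> {X. Borel_Sigma T (UNIV :: 'k set) W b X}"
  proof (cases rule: Borel_Sigma.cases)
    case open_level
    note amin = open_level(2)
    have Xo: "openin (tau_I I) X" using open_level(3) T_def by simp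
    obtain B where B: "B \<subseteq> I" "(card_of B, r) \<in> ordIso" "\<forall>X\<in>I. \<exists>Y\<in>B. X \<subseteq> Y"
      using ideal_basis by blast
    have "(r, card_of (UNIV :: 'k set)) \<in> ordIso"
      by (rule card_order_on_ordIso[OF kappa_card card_of_card_order_on[of "UNIV :: 'k set"]])
    then have BU: "(card_of B, card_of (UNIV :: 'k set)) \<in> ordIso" by (rule ordIso_transitive[OF B(2)])
    obtain h where h: "bij_betw h (UNIV :: 'k set) B"
      using card_of_ordIso[THEN iffD2, OF ordIso_symmetric[OF BU]] by blast
    define A where "A = (\<lambda>k. {x. \<forall>y. (\<forall>i\<in>h k. y i = x i) \<longrightarrow> y \<in> X})"
    have hI: "h k \<in> I" for k using h B(1) by (auto simp: bij_betw_def)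
    have Aopen: "openin (tau_I I) (A k)" for k
    proof -
      have "A k = (\<Union>x\<in>A k. {z. \<forall>i\<in>h k. z i = x i})"
      proof
        show "A k \<subseteq> (\<Union>x\<in>A k. {z. \<forall>i\<in>h k. z i = x i})" by blast
        show "(\<Union>x\<in>A k. {z. \<forall>i\<in>h k. z i = x i}) \<subseteq> A k" unfolding A_def by force
      qed
      also have "openin (tau_I I) \<dots>" by (intro openin_Union) (auto intro: nbhd_open[OF hI])
      finally show ?thesis .
    qed
    have Acl: "openin (tau_I I) (UNIV - A k)" for k
    proof -
      have "UNIV - A k = (\<Union>x\<in>UNIV - A k. {z. \<forall>i\<in>h k. z i = x i})"
      proof
        show "UNIV - A k \<subseteq> (\<Union>x\<in>UNIV - A k. {z. \<forall>i\<in>h k. z i = x i})" by blast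
        show "(\<Union>x\<in>UNIV - A k. {z. \<forall>i\<in>h k. z i = x i}) \<subseteq> UNIV - A k" unfolding A_def by force
      qed
      also have "openin (tau_I I) \<dots>" by (intro openin_Union) (auto intro: nbhd_open[OF hI])
      finally show ?thesis .
    qed
    have XA: "X = (\<Union>k. A k)"
    proof
      show "(\<Union>k. A k) \<subseteq> X" unfolding A_def by auto
      show "X \<subseteq> (\<Union>k. A k)"
      proof
        fix x assume "x \<in> X"
        then obtain D where D: "D \<in> I" "\<forall>y. (\<forall>i\<in>D. y i = x i) \<longrightarrow> y \<in> X"
          using open_local[OF Xo un emp] by blast
        then obtain Y where "Y \<in> B" "D \<subseteq> Y" using B(3) by blast
        then obtain k where "h k = Y" using h by (auto simp: bij_betw_def)
        then have "x \<in> A k" unfolding A_def using D \<open>D \<subseteq> Y\<close> by blast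
        then show "x \<in> (\<Union>k. A k)" by blast
      qed
    qed
    have "Borel_Sigma T (UNIV :: 'k set) W b (\<Union>k. A k)"
    proof (rule Borel_Sigma.union_level[OF bF bnm], intro ballI conjI)
      fix k :: 'k
      show "A k \<subseteq> topspace T" using top by simp
      show "\<exists>c. (c, b) \<in> W \<and> c \<noteq> b \<and> Borel_Sigma T (UNIV :: 'k set) W c (topspace T - A k)"
      proof (intro exI[of _ a] conjI)
        show "(a, b) \<in> W" "a \<noteq> b" using ab by auto
        show "Borel_Sigma T (UNIV :: 'k set) W a (topspace T - A k)"
          by (rule Borel_Sigma.open_level[OF open_level(1) amin]) (use Acl top T_def in simp)
      qed
    qed
    then show ?thesis using XA by simp
  next
    case (union_level A)
    have "Borel_Sigma T (UNIV :: 'k set) W b (\<Union>i. A i)"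
    proof (rule Borel_Sigma.union_level[OF bF bnm], intro ballI conjI)
      fix k :: 'k
      show "A k \<subseteq> topspace T" using union_level(4) by blast
      obtain c where c: "(c, a) \<in> W" "c \<noteq> a" "Borel_Sigma T (UNIV :: 'k set) W c (topspace T - A k)"
        using union_level(4) by blast
      have "(c, b) \<in> W" using c(1) ab(1) trans by (meson transD)
      moreover have "c \<noteq> b" using c ab anti by (auto dest: antisymD)
      ultimately show "\<exists>c. (c, b) \<in> W \<and> c \<noteq> b \<and> Borel_Sigma T (UNIV :: 'k set) W c (topspace T - A k)"
        using c(3) by blast
    qed
    then show ?thesis using union_level(1) by simp
  qed
qed

end
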